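(* Let $f,g\in\mathcal{S}$ and $\tau\in\mathbb{C}$, $\tau\ne0$. Suppose there are $r_0\in(0,1)$ and $\varepsilon>0$ with $\sup_{r_0<|z|<1}|N_g(z)-N_f(z)|(1-|z|^2)<\varepsilon$. Let $\mathbf{h}=g\circ f^{-1}$. Then there exist constants $C_1,C_2>0$ such that $C_1\left(\frac{1-|z|}{1+|z|}\right)^{|\tau|\varepsilon/2}\le|[\mathbf{h}'\circ f(z)]^\tau|\le C_2\left(\frac{1+|z|}{1-|z|}\right)^{|\tau|\varepsilon/2}$ for all $z$ with $r_0<|z|<1$.
   Context: $\Delta$ unit disk; $\mathcal{S}$ the class of univalent $f$ on $\Delta$ with $f(0)=0,f'(0)=1$; $N_f=f''/f'$. Since $\mathbf{h}'\circ f=g'/f'$ is nonvanishing on $\Delta$ with value $1$ at $0$, $[\mathbf{h}'\circ f(z)]^\tau=\exp(\tau\log(\mathbf{h}'\circ f)(z))$ with the branch of the logarithm vanishing at $0$. *)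

theory Defs
  imports "HOL-Complex_Analysis.Complex_Analysis"
begin

definition classS :: "(complex \<Rightarrow> complex) \<Rightarrow> bool" where
  "classS f \<longleftrightarrow> f holomorphic_on ball 0 1 \<and> inj_on f (ball 0 1)
                 \<and> f 0 = 0 \<and> deriv f 0 = 1"

definition preSchwarzian :: "(complex \<Rightarrow> complex) \<Rightarrow> complex \<Rightarrow> complex" where
  "preSchwarzian f z = deriv (deriv f) z / deriv f z"

definition hmap :: "(complex \<Rightarrow> complex) \<Rightarrow> (complex \<Rightarrow> complex) \<Rightarrow> complex \<Rightarrow> complex" where
  "hmap f g = g \<circ> inv_into (ball 0 1) f"

definition logbranch :: "(complex \<Rightarrow> complex) \<Rightarrow> (complex \<Rightarrow> complex) \<Rightarrow> complex \<Rightarrow> complex" where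
  "logbranch f g = (SOME L. continuous_on (ball 0 1) L \<and> L 0 = 0 \<and>
      (\<forall>z\<in>ball 0 1. exp (L z) = deriv (hmap f g) (f z)))"

definition hpow :: "(complex \<Rightarrow> complex) \<Rightarrow> (complex \<Rightarrow> complex) \<Rightarrow> complex \<Rightarrow> complex \<Rightarrow> complex" where
  "hpow f g \<tau> z = exp (\<tau> * logbranch f g z)"

end

theory Submission imports Defs begin

lemma exp_eq_log_unique:
  fixes A B :: "complex \<Rightarrow> complex"
  assumes S: "connected S" and cA: "continuous_on S A" and cB: "continuous_on S B"
    and e: "\<And>x. x \<in> S \<Longrightarrow> exp (A x) = exp (B x)"
    and x0: "x0 \<in> S" "A x0 = B x0"
  shows "\<And>x. x \<in> S \<Longrightarrow> A x = B x"
proof -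
  define d where "d x = A x - B x" for x
  have d1: "\<exists>n::int. d x = complex_of_real (2 * of_int n * pi) * \<i>" if "x \<in> S" for x
  proof -
    have "exp (d x) = 1" using e[OF that] by (simp add: d_def exp_diff)
    then obtain n :: int where "Re (d x) = 0" "Im (d x) = of_int (2*n) * pi"
      by (auto simp: exp_eq_1)
    then have "d x = complex_of_real (2 * of_int n * pi) * \<i>"
      by (simp add: complex_eq_iff)
    then show ?thesis by blast
  qed
  have "d constant_on S"
  proof (rule continuous_discrete_range_constant[OF S])
    show "continuous_on S d" unfolding d_def by (intro continuous_intros cA cB)
    fix x assume x: "x \<in> S"
    show "\<exists>e>0. \<forall>y. y \<in> S \<and> d y \<noteq> d x \<longrightarrow> e \<le> norm (d y - d x)"
    proof (intro exI[of _ 1] conjI allI impI)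
      fix y assume y: "y \<in> S \<and> d y \<noteq> d x"
      obtain n where n: "d x = complex_of_real (2 * of_int n * pi) * \<i>" using d1 x by blast
      obtain m where m: "d y = complex_of_real (2 * of_int m * pi) * \<i>" using d1 y by blast
      have "n \<noteq> m" using y n m by auto
      then have "1 \<le> \<bar>m - n\<bar>" by linarith
      then have "1 \<le> \<bar>of_int m - of_int n :: real\<bar>"
        by (metis of_int_1_le_iff of_int_abs of_int_diff)
      moreover have "d y - d x = complex_of_real (2 * pi * (of_int m - of_int n)) * \<i>"
        using m n by (simp add: algebra_simps)
      then have "norm (d y - d x) = 2 * pi * \<bar>of_int m - of_int n\<bar>"
        by (simp only: norm_mult norm_of_real abs_mult) simp
      ultimately show "1 \<le> norm (d y - d x)" using pi_gt3
        by (smt (verit) mult_left_mono[of 1 "\<bar>of_int m - of_int n :: real\<bar>" "2 * pi"])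
    qed simp
  qed
  then show "\<And>x. x \<in> S \<Longrightarrow> A x = B x" using x0
    unfolding constant_on_def d_def by (metis eq_iff_diff_eq_0)
qed

lemma tanh_artanh_real:
  fixes x :: real assumes "-1 < x" "x < 1"
  shows "tanh (artanh x) = x"
proof -
  define q where "q = (1 + x) / (1 - x)"
  have q: "q > 0" using assms by (simp add: q_def)
  have "exp (- 2 * artanh x) = inverse q"
    using q by (simp add: artanh_def q_def[symmetric] exp_minus)
  then have e: "exp (- 2 * artanh x) = (1 - x) / (1 + x)" by (simp add: q_def)
  have "tanh (artanh x) = (1 - (1 - x) / (1 + x)) / (1 + (1 - x) / (1 + x))"
    by (simp only: tanh_real_altdef e)
  also have "\<dots> = x" using assms by (simp add: field_simps)
  finally show ?thesis .
qed



theorem mainTheorem10: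
  fixes f g :: "complex \<Rightarrow> complex" and \<tau> :: complex and r0 \<epsilon> :: real
  assumes "classS f" and "classS g" and "\<tau> \<noteq> 0"
    and "0 < r0" and "r0 < 1" and "0 < \<epsilon>"
    and "(SUP z\<in>{z. r0 < cmod z \<and> cmod z < 1}.
            ereal (cmod (preSchwarzian g z - preSchwarzian f z) * (1 - (cmod z)\<^sup>2))) < ereal \<epsilon>"
  shows "\<exists>C1 C2. C1 > 0 \<and> C2 > 0 \<and>
    (\<forall>z. r0 < cmod z \<and> cmod z < 1 \<longrightarrow>
       C1 * ((1 - cmod z) / (1 + cmod z)) powr (cmod \<tau> * \<epsilon> / 2) \<le> cmod (hpow f g \<tau> z) \<and>
       cmod (hpow f g \<tau> z) \<le> C2 * ((1 + cmod z) / (1 - cmod z)) powr (cmod \<tau> * \<epsilon> / 2))"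
proof -
  define B where "B = ball (0::complex) 1"
  have oB: "open B" and cB: "connected B" and cvB: "convex B" and B0: "0 \<in> B"
    by (auto simp: B_def)
  have holf: "f holomorphic_on B" and injf: "inj_on f B" and f0: "f 0 = 0" and df0: "deriv f 0 = 1"
    using assms(1) by (auto simp: classS_def B_def)
  have holg: "g holomorphic_on B" and injg: "inj_on g B" and g0: "g 0 = 0" and dg0: "deriv g 0 = 1"
    using assms(2) by (auto simp: classS_def B_def)
  have fnz: "deriv f z \<noteq> 0" if "z \<in> B" for z
    by (rule holomorphic_injective_imp_regular[OF holf oB injf that])
  have gnz: "deriv g z \<noteq> 0" if "z \<in> B" for z
    by (rule holomorphic_injective_imp_regular[OF holg oB injg that])
  have dfD: "(f has_field_derivative deriv f z) (at z)" if "z \<in> B" for z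
    by (rule holomorphic_derivI[OF holf oB that])
  have dgD: "(g has_field_derivative deriv g z) (at z)" if "z \<in> B" for z
    by (rule holomorphic_derivI[OF holg oB that])
  have hdf: "deriv f holomorphic_on B" by (rule holomorphic_deriv[OF holf oB])
  have hdg: "deriv g holomorphic_on B" by (rule holomorphic_deriv[OF holg oB])
  have dfD2: "(deriv f has_field_derivative deriv (deriv f) z) (at z)" if "z \<in> B" for z
    by (rule holomorphic_derivI[OF hdf oB that])
  have dgD2: "(deriv g has_field_derivative deriv (deriv g) z) (at z)" if "z \<in> B" for z
    by (rule holomorphic_derivI[OF hdg oB that])
  have contf: "continuous_on B f" by (rule holomorphic_on_imp_continuous_on[OF holf])
  define Phi where "Phi = (\<lambda>z. deriv g z / deriv f z)"
  have hPhi: "Phi holomorphic_on B" unfolding Phi_def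
    by (rule holomorphic_on_divide[OF hdg hdf]) (use fnz in auto)
  have Phinz: "Phi z \<noteq> 0" if "z \<in> B" for z using fnz[OF that] gnz[OF that] by (simp add: Phi_def)
  obtain L0 where hL0: "L0 holomorphic_on B" and eL0: "\<And>z. z \<in> B \<Longrightarrow> Phi z = exp (L0 z)"
    using contractible_imp_holomorphic_log[OF hPhi convex_imp_contractible[OF cvB] Phinz] by blast
  have Phi0: "Phi 0 = 1" using df0 dg0 by (simp add: Phi_def)
  define L1 where "L1 = (\<lambda>z. L0 z - L0 0)"
  have eL1: "exp (L1 z) = Phi z" if "z \<in> B" for z
    using eL0[OF that] eL0[OF B0] Phi0 by (simp add: L1_def exp_diff)
  have hL1: "L1 holomorphic_on B" unfolding L1_def by (intro holomorphic_intros hL0)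
  have cL1: "continuous_on B L1" by (rule holomorphic_on_imp_continuous_on[OF hL1])
  have hmapD: "deriv (hmap f g) (f z) = Phi z" if z: "z \<in> B" for z
  proof -
    have inv: "DERIV (inv_into B f) (f z) :> inverse (deriv f z)"
      by (rule has_field_derivative_inverse_strong[OF dfD[OF z] fnz[OF z] oB z contf])
         (simp add: injf inv_into_f_f)
    have "DERIV g (inv_into B f (f z)) :> deriv g z" using dgD[OF z] by (simp add: injf inv_into_f_f z)
    from DERIV_chain[OF this inv]
    have "DERIV (hmap f g) (f z) :> deriv g z * inverse (deriv f z)"
      by (simp add: hmap_def B_def)
    then show ?thesis by (simp add: DERIV_imp_deriv Phi_def divide_inverse)
  qed
  define L where "L = logbranch f g"
  have "\<exists>L. continuous_on (ball 0 1) L \<and> L 0 = 0 \<and>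
      (\<forall>z\<in>ball 0 1. exp (L z) = deriv (hmap f g) (f z))"
    using cL1 eL1 hmapD by (intro exI[of _ L1]) (auto simp: B_def L1_def)
  from someI_ex[OF this]
  have cL: "continuous_on B L" and L0': "L 0 = 0" and eL: "\<And>z. z \<in> B \<Longrightarrow> exp (L z) = exp (L1 z)"
    using eL1 hmapD by (auto simp: L_def logbranch_def B_def)
  have LL1: "\<And>z. z \<in> B \<Longrightarrow> L z = L1 z"
  proof -
    have "L 0 = L1 0" using L0' by (simp add: L1_def)
    then show "\<And>z. z \<in> B \<Longrightarrow> L z = L1 z" using exp_eq_log_unique[OF cB cL cL1 eL B0] by blast
  qed
  define D where "D = (\<lambda>z. preSchwarzian g z - preSchwarzian f z)"
  have L1D: "(L1 has_field_derivative D z) (at z)" if z: "z \<in> B" for z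
  proof -
    have L0D: "(L0 has_field_derivative deriv L0 z) (at z)" by (rule holomorphic_derivI[OF hL0 oB z])
    have e1: "((\<lambda>w. exp (L0 w)) has_field_derivative exp (L0 z) * deriv L0 z) (at z)"
      using DERIV_chain'[OF L0D DERIV_exp] by (simp add: mult.commute)
    have Pd: "(Phi has_field_derivative (deriv (deriv g) z * deriv f z - deriv g z * deriv (deriv f) z)
               / (deriv f z * deriv f z)) (at z)"
      unfolding Phi_def by (rule DERIV_divide[OF dgD2[OF z] dfD2[OF z] fnz[OF z]])
    have e2: "((\<lambda>w. exp (L0 w)) has_field_derivative (deriv (deriv g) z * deriv f z - deriv g z * deriv (deriv f) z)
               / (deriv f z * deriv f z)) (at z)"
      by (rule has_field_derivative_transform_within_open[OF Pd oB z]) (simp add: eL0)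
    have eq: "exp (L0 z) * deriv L0 z = (deriv (deriv g) z * deriv f z - deriv g z * deriv (deriv f) z)
               / (deriv f z * deriv f z)"
      by (rule DERIV_unique[OF e1 e2])
    have Ez: "exp (L0 z) \<noteq> 0" by simp
    have bE: "deriv g z = deriv f z * exp (L0 z)"
      using eL0[OF z] fnz[OF z] by (simp add: Phi_def field_simps)
    have "deriv L0 z = (deriv (deriv g) z * deriv f z - deriv g z * deriv (deriv f) z)
               / (deriv f z * deriv f z) / exp (L0 z)"
      by (metis eq Ez nonzero_mult_div_cancel_left)
    also have "\<dots> = D z"
      unfolding D_def preSchwarzian_def bE using Ez fnz[OF z]
      by (simp add: field_simps)
    finally have "deriv L0 z = D z" .
    then show ?thesis unfolding L1_def using DERIV_diff[OF L0D DERIV_const[of "L0 0"]] by simp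
  qed
  have Dbd: "cmod (D u) * (1 - (cmod u)\<^sup>2) < \<epsilon>" if "r0 < cmod u" "cmod u < 1" for u
  proof -
    have "ereal (cmod (D u) * (1 - (cmod u)\<^sup>2)) \<le> (SUP z\<in>{z. r0 < cmod z \<and> cmod z < 1}.
            ereal (cmod (preSchwarzian g z - preSchwarzian f z) * (1 - (cmod z)\<^sup>2)))"
      unfolding D_def by (rule SUP_upper) (use that in auto)
    then have "ereal (cmod (D u) * (1 - (cmod u)\<^sup>2)) < ereal \<epsilon>"
      using assms(7) by (rule order.strict_trans1)
    then show ?thesis by simp
  qed
  have sphB: "sphere 0 r0 \<subseteq> B" using assms(5) by (auto simp: B_def)
  have "bounded (L1 ` sphere 0 r0)"
    by (rule compact_imp_bounded[OF compact_continuous_image[OF continuous_on_subset[OF cL1 sphB]]])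
      (simp)
  then obtain M where M0: "\<forall>x\<in>L1 ` sphere 0 r0. norm x \<le> M"
    unfolding bounded_iff by blast
  have M: "\<And>u. u \<in> sphere 0 r0 \<Longrightarrow> cmod (L1 u) \<le> M" using M0 by blast
  have key: "cmod (L1 z) \<le> M + \<epsilon> / 2 * ln ((1 + cmod z) / (1 - cmod z))"
    if z1: "r0 < cmod z" and z2: "cmod z < 1" for z
  proof -
    define r where "r = cmod z"
    have r: "r0 < r" "r < 1" "0 < r" using z1 z2 assms(4) by (auto simp: r_def)
    define w where "w = z / of_real r"
    have w1: "cmod w = 1" using r by (simp add: w_def r_def norm_divide)
    have zw: "z = of_real r * w" using r by (simp add: w_def)
    define a where "a = artanh r0"
    define b where "b = artanh r"
    have ta: "tanh a = r0" using assms(4,5) by (simp add: a_def tanh_artanh_real)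
    have tb: "tanh b = r" using r by (simp add: b_def tanh_artanh_real)
    have ab: "a < b" using ta tb r(1) by (metis tanh_real_less_iff)
    have a0: "0 < a" using ta assms(4) by (metis tanh_real_pos_iff)
    define G where "G = (\<lambda>s. L1 (of_real (tanh s) * w))"
    have tin: "r0 \<le> tanh s \<and> tanh s \<le> r" if "s \<in> {a..b}" for s
      using that ta tb by auto
    have inB: "of_real (tanh s) * w \<in> B" if "s \<in> {a..b}" for s
      using tin[OF that] r assms(4) by (simp add: B_def norm_mult w1 abs_if)
    have cG: "continuous_on {a..b} G" unfolding G_def
      by (rule continuous_on_compose2[OF cL1]) (auto intro!: continuous_intros inB)
    define V where "V s = of_real (1 - (tanh s)^2) * w * D (of_real (tanh s) * w)" for s
    have dG: "(G has_derivative (\<lambda>h. h *\<^sub>R V s)) (at s)" if "a < s" "s < b" for s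
    proof -
      have s: "s \<in> {a..b}" using that by auto
      have d0: "((\<lambda>s. of_real (tanh s)) has_vector_derivative of_real (1 - (tanh s)^2)) (at s)"
        by (rule has_vector_derivative_of_real) (use has_field_derivative_tanh[OF _ DERIV_ident, of s] in simp)
      have d1: "((\<lambda>s. of_real (tanh s) * w) has_vector_derivative of_real (1 - (tanh s)^2) * w) (at s)"
        using has_vector_derivative_mult_left[OF d0, of w] by (simp add: mult.commute)
      have "(G has_vector_derivative (of_real (1 - (tanh s)^2) * w * D (of_real (tanh s) * w))) (at s)"
        using field_vector_diff_chain_at[OF d1 L1D[OF inB[OF s]]] by (simp add: G_def o_def)
      then show ?thesis by (simp add: V_def has_vector_derivative_def)
    qed
    obtain s where s: "s \<in> {a<..<b}" and ms: "norm (G b - G a) \<le> norm ((b - a) *\<^sub>R V s)"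
      using mvt_general[OF ab cG dG] by blast
    have Vb: "norm (V s) \<le> \<epsilon>"
    proof -
      let ?u = "of_real (tanh s) * w"
      have t: "r0 < tanh s" "tanh s < 1" "0 < tanh s"
        using s ta tb r assms(4) tanh_real_lt_1[of s] by auto
      have nu: "cmod ?u = tanh s" using w1 t by (simp add: norm_mult)
      have t2: "0 \<le> 1 - (tanh s)^2" using t by (simp add: abs_square_le_1 less_imp_le)
      have e1: "(1 - (complex_of_real (tanh s))^2) = of_real (1 - (tanh s)^2)" by simp
      have n1: "cmod (1 - (complex_of_real (tanh s))^2) = 1 - (tanh s)^2"
        unfolding e1 norm_of_real using t2 by simp
      have "norm (V s) = cmod (D ?u) * (1 - (cmod ?u)^2)"
        using t2 by (simp add: V_def norm_mult w1 nu n1)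
      also have "\<dots> < \<epsilon>" by (rule Dbd) (simp_all add: nu t)
      finally show ?thesis by simp
    qed
    have Gb: "G b = L1 z" by (simp add: G_def tb zw)
    have Ga: "cmod (G a) \<le> M" unfolding G_def ta
      by (rule M) (simp add: norm_mult w1 assms(4) less_imp_le)
    have "cmod (L1 z) \<le> cmod (G a) + cmod (G b - G a)"
      using norm_triangle_ineq[of "G a" "G b - G a"] Gb by simp
    also have "\<dots> \<le> M + (b - a) * \<epsilon>"
    proof -
      have "(b - a) * cmod (V s) \<le> (b - a) * \<epsilon>" using Vb ab by (intro mult_left_mono) auto
      moreover have "cmod ((b - a) *\<^sub>R V s) = (b - a) * cmod (V s)" using ab by simp
      ultimately show ?thesis using Ga ms by linarith
    qed
    also have "\<dots> \<le> M + \<epsilon> * b" using a0 assms(6) by (simp add: algebra_simps)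
    also have "\<epsilon> * b = \<epsilon> / 2 * ln ((1 + cmod z) / (1 - cmod z))"
      by (simp add: b_def artanh_def r_def)
    finally show ?thesis by simp
  qed
  define K where "K = cmod \<tau>"
  show ?thesis
  proof (rule exI[of _ "exp (- K * M)"], rule exI[of _ "exp (K * M)"], intro conjI)
    show "exp (- K * M) > 0" "exp (K * M) > 0" by simp_all
  next
   show "\<forall>z. r0 < cmod z \<and> cmod z < 1 \<longrightarrow>
       exp (- K * M) * ((1 - cmod z) / (1 + cmod z)) powr (cmod \<tau> * \<epsilon> / 2) \<le> cmod (hpow f g \<tau> z) \<and>
       cmod (hpow f g \<tau> z) \<le> exp (K * M) * ((1 + cmod z) / (1 - cmod z)) powr (cmod \<tau> * \<epsilon> / 2)"
   proof (intro allI impI)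
    fix z assume z: "r0 < cmod z \<and> cmod z < 1"
    define r where "r = cmod z"
    have r: "0 < r" "r < 1" using z assms(4) by (auto simp: r_def)
    define q where "q = (1 + r) / (1 - r)"
    have q: "q > 0" using r by (simp add: q_def)
    have zB: "z \<in> B" using z by (simp add: B_def)
    have hp: "cmod (hpow f g \<tau> z) = exp (Re (\<tau> * L1 z))"
      by (simp add: hpow_def LL1[OF zB, folded L_def] L_def[symmetric])
    have "\<bar>Re (\<tau> * L1 z)\<bar> \<le> K * cmod (L1 z)"
      using abs_Re_le_cmod[of "\<tau> * L1 z"] by (simp add: K_def norm_mult)
    also have "\<dots> \<le> K * (M + \<epsilon> / 2 * ln q)"
      using key[of z] z by (intro mult_left_mono) (auto simp: K_def q_def r_def)
    finally have bd: "\<bar>Re (\<tau> * L1 z)\<bar> \<le> K * M + K * \<epsilon> / 2 * ln q" by (simp add: algebra_simps)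
    have lnq: "ln ((1 - r) / (1 + r)) = - ln q"
      using r by (simp add: q_def ln_div)
    have p1: "((1 + r) / (1 - r)) powr (K * \<epsilon> / 2) = exp (K * \<epsilon> / 2 * ln q)"
      using q r by (simp add: powr_def q_def)
    have p2: "((1 - r) / (1 + r)) powr (K * \<epsilon> / 2) = exp (- (K * \<epsilon> / 2 * ln q))"
      using r lnq by (simp add: powr_def)
    have lo: "exp (- K * M) * ((1 - cmod z) / (1 + cmod z)) powr (cmod \<tau> * \<epsilon> / 2) \<le> cmod (hpow f g \<tau> z)"
      unfolding hp r_def[symmetric] K_def[symmetric] p2 mult_exp_exp
      using bd by simp
    have hi: "cmod (hpow f g \<tau> z) \<le> exp (K * M) * ((1 + cmod z) / (1 - cmod z)) powr (cmod \<tau> * \<epsilon> / 2)"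
      unfolding hp r_def[symmetric] K_def[symmetric] p1 mult_exp_exp
      using bd by simp
    from lo hi show "exp (- K * M) * ((1 - cmod z) / (1 + cmod z)) powr (cmod \<tau> * \<epsilon> / 2) \<le> cmod (hpow f g \<tau> z) \<and> cmod (hpow f g \<tau> z) \<le> exp (K * M) * ((1 + cmod z) / (1 - cmod z)) powr (cmod \<tau> * \<epsilon> / 2)" by blast
   qed
  qed
qed

end
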